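(* Let $k\ge3$, $k\le d$, and fix $p\in\{1,\dots,k-1\}$ and $t\in[0,1)$ such that either ($p=1$ and $t\ne0$), or $p\in\{2,\dots,k-2\}$, or ($p=k-1$ and $t<\frac{d-k+1}{d-k+2}$). Then there exists a constant $\delta_0>0$ depending only on $(p,t,k,d)$ such that every exact-repair regenerating code with parameters $\{(n,k,d),(\alpha,\beta),B\}$, $n\ge d+1$, with $\alpha=(d-p+1-t)\beta$ satisfies $$\frac{\beta}{B}\ \ge\ \frac{\beta}{\hat B}+\delta_0 ,$$ where $\hat B=\sum_{i=1}^k\min\{\alpha,(d-i+1)\beta\}$. In particular, at these operating points the storage–repair-bandwidth tradeoff of exact-repair regenerating codes is strictly (and uniformly in $\beta,B$) bounded away from the functional-repair tradeoff.
   Context: Setting: fix integers $k\le d<n$, a finite field $\mathbb{F}_q$, and reals $\alpha,\beta>0$. An exact-repair regenerating code with parameters $\{(n,k,d),(\alpha,\beta),B\}$: a file $M$ uniformly distributed over $\mathbb{F}_q^B$ (entropies measured in units of $\log q$); node $i\in[n]$ stores $W_i$, a deterministic function of $M$, with $H(W_i)\le\alpha$; (data collection) for every $K\subseteq[n]$ with $|K|=k$, $M$ is a function of $(W_a)_{a\in K}$; (exact repair) for every node $y$ and every set $D\subseteq[n]\setminus\{y\}$ with $|D|=d$, each $x\in D$ sends helper data (depending on $y$ and $D$), a deterministic function of $W_x$ of entropy at most $\beta$, from which $W_y$ is exactly recoverable. The quantity $\hat B$ is the optimal file size under functional repair (cut-set bound). *)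

theory Defs
  imports Complex_Main "HOL-Number_Theory.Prime_Powers"
begin

text \<open>The field F_q is represented by its underlying set {0..<q} (q a prime power);
  only the uniform distribution of the file matters.\<close>

definition file_space :: "nat \<Rightarrow> nat \<Rightarrow> nat list set" where
  "file_space q B = {xs. length xs = B \<and> set xs \<subseteq> {..<q}}"

definition ent :: "nat \<Rightarrow> 'm set \<Rightarrow> ('m \<Rightarrow> 'b) \<Rightarrow> real" where
  "ent q S g = (\<Sum>y\<in>g ` S.
      (real (card {m\<in>S. g m = y}) / real (card S)) *
      log (real q) (real (card S) / real (card {m\<in>S. g m = y})))"

text \<open>Nodes are 1..n; node i stores W i (M), a deterministic function of M (values encoded in nat,
  which is no loss of generality since the file space is finite). Helper data sent by x
  (depending on y and D) is a deterministic function h x of W x (M).\<close>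
definition exact_repair_code ::
  "nat \<Rightarrow> nat \<Rightarrow> nat \<Rightarrow> nat \<Rightarrow> real \<Rightarrow> real \<Rightarrow> nat \<Rightarrow> (nat \<Rightarrow> nat list \<Rightarrow> nat) \<Rightarrow> bool" where
  "exact_repair_code q n k d \<alpha> \<beta> B W \<longleftrightarrow>
     (\<forall>i\<in>{1..n}. ent q (file_space q B) (W i) \<le> \<alpha>) \<and>
     (\<forall>K. K \<subseteq> {1..n} \<and> card K = k \<longrightarrow>
        (\<forall>m1\<in>file_space q B. \<forall>m2\<in>file_space q B.
            (\<forall>a\<in>K. W a m1 = W a m2) \<longrightarrow> m1 = m2)) \<and>
     (\<forall>y\<in>{1..n}. \<forall>D. D \<subseteq> {1..n} - {y} \<and> card D = d \<longrightarrow>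
        (\<exists>h :: nat \<Rightarrow> nat \<Rightarrow> nat.
           (\<forall>x\<in>D. ent q (file_space q B) (\<lambda>m. h x (W x m)) \<le> \<beta>) \<and>
           (\<forall>m1\<in>file_space q B. \<forall>m2\<in>file_space q B.
              (\<forall>x\<in>D. h x (W x m1) = h x (W x m2)) \<longrightarrow> W y m1 = W y m2)))"

text \<open>Functional-repair (cut-set) optimal file size.\<close>
definition Bhat :: "nat \<Rightarrow> nat \<Rightarrow> real \<Rightarrow> real \<Rightarrow> real" where
  "Bhat k d \<alpha> \<beta> = (\<Sum>i=1..k. min \<alpha> ((real d - real i + 1) * \<beta>))"

end

theory Submission
  imports Defs
begin


definition cnt :: "'m set \<Rightarrow> ('m \<Rightarrow> 'b) \<Rightarrow> 'm \<Rightarrow> nat" where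
  "cnt S f m = card {m'\<in>S. f m' = f m}"

lemma cnt_pos: "finite S \<Longrightarrow> m \<in> S \<Longrightarrow> 0 < cnt S f m"
  unfolding cnt_def by (subst card_gt_0_iff) auto

lemma cnt_le: "finite S \<Longrightarrow> cnt S f m \<le> card S"
  unfolding cnt_def by (rule card_mono) auto

lemma ent_alt:
  assumes "finite S"
  shows "ent q S f = (\<Sum>m\<in>S. log (real q) (real (card S) / real (cnt S f m))) / real (card S)"
proof -
  have "(\<Sum>m\<in>S. log (real q) (real (card S) / real (cnt S f m)))
      = (\<Sum>y\<in>f ` S. \<Sum>m\<in>{x\<in>S. f x = y}. log (real q) (real (card S) / real (cnt S f m)))"
    by (rule sum.image_gen[OF assms])
  also have "\<dots> = (\<Sum>y\<in>f ` S. real (card {m\<in>S. f m = y}) * log (real q) (real (card S) / real (card {m\<in>S. f m = y})))"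
  proof (rule sum.cong[OF refl])
    fix y assume "y \<in> f ` S"
    have "(\<Sum>m\<in>{x\<in>S. f x = y}. log (real q) (real (card S) / real (cnt S f m)))
        = (\<Sum>m\<in>{x\<in>S. f x = y}. log (real q) (real (card S) / real (card {m\<in>S. f m = y})))"
      by (rule sum.cong) (auto simp: cnt_def)
    then show "(\<Sum>m\<in>{x\<in>S. f x = y}. log (real q) (real (card S) / real (cnt S f m))) =
         real (card {m\<in>S. f m = y}) * log (real q) (real (card S) / real (card {m\<in>S. f m = y}))"
      by simp
  qed
  finally show ?thesis unfolding ent_def
    by (simp add: sum_divide_distrib)
qed




definition SL :: "'m set \<Rightarrow> ('m \<Rightarrow> 'b) \<Rightarrow> real" where
  "SL S f = (\<Sum>m\<in>S. ln (real (card S) / real (cnt S f m)))"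

lemma ent_SL: "finite S \<Longrightarrow> ent q S f = SL S f / (real (card S) * ln (real q))"
  by (simp add: ent_alt SL_def log_def sum_divide_distrib mult.commute)

lemma card_ind: "finite S \<Longrightarrow> real (card {x\<in>S. P x}) = (\<Sum>x\<in>S. if P x then 1 else 0)"
  by (simp add: sum.If_cases Int_def)

lemma SL_cong:
  assumes "\<And>m1 m2. m1 \<in> S \<Longrightarrow> m2 \<in> S \<Longrightarrow> (f m1 = f m2 \<longleftrightarrow> g m1 = g m2)"
  shows "SL S f = SL S g"
proof -
  have "cnt S f m = cnt S g m" if "m \<in> S" for m
    unfolding cnt_def using assms that by (intro arg_cong[where f=card]) auto
  then show ?thesis unfolding SL_def by (intro sum.cong) auto
qed

lemma SL_mono:
  assumes "finite S"
  shows "SL S f \<le> SL S (\<lambda>m. (f m, g m))"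
  unfolding SL_def
proof (rule sum_mono)
  fix m assume m: "m \<in> S"
  have c1: "0 < cnt S (\<lambda>m. (f m, g m)) m" using cnt_pos[OF assms m] .
  have c2: "cnt S (\<lambda>m. (f m, g m)) m \<le> cnt S f m"
    unfolding cnt_def using assms by (intro card_mono) auto
  have N: "0 < card S" using assms m by (auto simp: card_gt_0_iff)
  show "ln (real (card S) / real (cnt S f m)) \<le> ln (real (card S) / real (cnt S (\<lambda>m. (f m, g m)) m))"
    using c1 c2 N by (auto intro!: divide_left_mono simp: of_nat_le_iff)
qed

lemma SL_nonneg:
  assumes "finite S" shows "0 \<le> SL S f"
  unfolding SL_def
proof (rule sum_nonneg)
  fix m assume m: "m \<in> S"
  have "0 < cnt S f m" "cnt S f m \<le> card S" using cnt_pos[OF assms m] cnt_le[OF assms] by auto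
  then show "0 \<le> ln (real (card S) / real (cnt S f m))" by simp
qed

lemma SL_inj:
  assumes "finite S" "inj_on f S"
  shows "SL S f = real (card S) * ln (real (card S))"
proof -
  have "cnt S f m = 1" if "m \<in> S" for m
  proof -
    have "{m'\<in>S. f m' = f m} = {m}" using assms(2) that by (auto simp: inj_on_def)
    then show ?thesis by (simp add: cnt_def)
  qed
  then show ?thesis unfolding SL_def by simp
qed

lemma SL_const:
  assumes "\<And>m. m \<in> S \<Longrightarrow> f m = c"
  shows "SL S f = 0"
proof -
  have "cnt S f m = card S" if "m \<in> S" for m
    unfolding cnt_def using assms that by (intro arg_cong[where f=card]) auto
  then show ?thesis unfolding SL_def by simp
qed




lemma inner_bound:
  fixes X :: "'m \<Rightarrow> 'a" and Y :: "'m \<Rightarrow> 'b" and Z :: "'m \<Rightarrow> 'c"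
  assumes S: "finite S" and m1: "m1 \<in> S" and m2: "m2 \<in> S"
  shows "(\<Sum>m\<in>S. if (X m1 = X m \<and> Z m1 = Z m) \<and> (Y m2 = Y m \<and> Z m2 = Z m)
           then 1 / (real (cnt S (\<lambda>m. (X m, Y m, Z m)) m) * real (cnt S Z m)) else 0)
         \<le> (if Z m1 = Z m2 then 1 / real (cnt S Z m1) else 0)"
    (is "?L \<le> ?R")
proof -
  define T where "T = {m\<in>S. X m = X m1 \<and> Y m = Y m2 \<and> Z m = Z m1 \<and> Z m = Z m2}"
  have fT: "finite T" using S by (simp add: T_def)
  have L: "?L = (\<Sum>m\<in>T. 1 / (real (cnt S (\<lambda>m. (X m, Y m, Z m)) m) * real (cnt S Z m)))"
    unfolding T_def using S by (simp add: sum.If_cases Int_def conj_commute eq_commute conj_left_commute)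
  show ?thesis
  proof (cases "T = {}")
    case True
    then show ?thesis using L by simp
  next
    case False
    then obtain m0 where m0: "m0 \<in> T" by auto
    then have z12: "Z m1 = Z m2" by (auto simp: T_def)
    have "cnt S (\<lambda>m. (X m, Y m, Z m)) m = card T" if "m \<in> T" for m
      unfolding cnt_def using that by (intro arg_cong[where f=card]) (auto simp: T_def)
    moreover have "cnt S Z m = cnt S Z m1" if "m \<in> T" for m
      unfolding cnt_def using that by (intro arg_cong[where f=card]) (auto simp: T_def)
    ultimately have "?L = (\<Sum>m\<in>T. 1 / (real (card T) * real (cnt S Z m1)))"
      unfolding L by (intro sum.cong) auto
    also have "\<dots> = 1 / real (cnt S Z m1)"
      using False fT by (simp add: card_gt_0_iff)
    finally show ?thesis using z12 by simp
  qed
qed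

lemma key_sum:
  fixes X :: "'m \<Rightarrow> 'a" and Y :: "'m \<Rightarrow> 'b" and Z :: "'m \<Rightarrow> 'c"
  assumes S: "finite S"
  shows "(\<Sum>m\<in>S. real (cnt S (\<lambda>m. (X m, Z m)) m) * real (cnt S (\<lambda>m. (Y m, Z m)) m)
            / (real (cnt S (\<lambda>m. (X m, Y m, Z m)) m) * real (cnt S Z m))) \<le> real (card S)"
proof -
  define c where "c m = real (cnt S (\<lambda>m. (X m, Y m, Z m)) m) * real (cnt S Z m)" for m
  have a: "real (cnt S (\<lambda>m. (X m, Z m)) m) = (\<Sum>m1\<in>S. if X m1 = X m \<and> Z m1 = Z m then 1 else 0)" for m
    unfolding cnt_def using S by (simp add: card_ind)
  have b: "real (cnt S (\<lambda>m. (Y m, Z m)) m) = (\<Sum>m2\<in>S. if Y m2 = Y m \<and> Z m2 = Z m then 1 else 0)" for m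
    unfolding cnt_def using S by (simp add: card_ind)
  have "(\<Sum>m\<in>S. real (cnt S (\<lambda>m. (X m, Z m)) m) * real (cnt S (\<lambda>m. (Y m, Z m)) m) / c m)
      = (\<Sum>m\<in>S. \<Sum>m1\<in>S. \<Sum>m2\<in>S. if (X m1 = X m \<and> Z m1 = Z m) \<and> (Y m2 = Y m \<and> Z m2 = Z m) then 1 / c m else 0)"
  proof (rule sum.cong[OF refl])
    fix m assume "m \<in> S"
    have "(\<Sum>m1\<in>S. if X m1 = X m \<and> Z m1 = Z m then 1 else 0) * (\<Sum>m2\<in>S. if Y m2 = Y m \<and> Z m2 = Z m then 1 else 0) / c m
       = (\<Sum>m1\<in>S. \<Sum>m2\<in>S. (if X m1 = X m \<and> Z m1 = Z m then 1 else 0) * (if Y m2 = Y m \<and> Z m2 = Z m then 1 else 0) / c m)"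
      by (simp add: sum_product sum_divide_distrib)
    also have "\<dots> = (\<Sum>m1\<in>S. \<Sum>m2\<in>S. if (X m1 = X m \<and> Z m1 = Z m) \<and> (Y m2 = Y m \<and> Z m2 = Z m) then 1 / c m else 0)"
      by (intro sum.cong refl) auto
    finally show "real (cnt S (\<lambda>m. (X m, Z m)) m) * real (cnt S (\<lambda>m. (Y m, Z m)) m) / c m =
         (\<Sum>m1\<in>S. \<Sum>m2\<in>S. if (X m1 = X m \<and> Z m1 = Z m) \<and> (Y m2 = Y m \<and> Z m2 = Z m) then 1 / c m else 0)"
      unfolding a b .
  qed
  also have "\<dots> = (\<Sum>m1\<in>S. \<Sum>m2\<in>S. \<Sum>m\<in>S. if (X m1 = X m \<and> Z m1 = Z m) \<and> (Y m2 = Y m \<and> Z m2 = Z m) then 1 / c m else 0)"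
    by (subst sum.swap) (subst (2) sum.swap, rule refl)
  also have "\<dots> \<le> (\<Sum>m1\<in>S. \<Sum>m2\<in>S. if Z m1 = Z m2 then 1 / real (cnt S Z m1) else 0)"
    unfolding c_def by (intro sum_mono inner_bound[OF S])
  also have "\<dots> = (\<Sum>m1\<in>S. 1)"
  proof (rule sum.cong[OF refl])
    fix m1 assume m1: "m1 \<in> S"
    have "(\<Sum>m2\<in>S. if Z m1 = Z m2 then 1 / real (cnt S Z m1) else 0)
        = (\<Sum>m2\<in>S. if Z m2 = Z m1 then 1 else 0) / real (cnt S Z m1)"
      unfolding sum_divide_distrib by (intro sum.cong) auto
    also have "\<dots> = real (cnt S Z m1) / real (cnt S Z m1)"
      unfolding cnt_def using S by (simp add: card_ind)
    also have "\<dots> = 1" using cnt_pos[OF S m1, of Z] by simp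
    finally show "(\<Sum>m2\<in>S. if Z m1 = Z m2 then 1 / real (cnt S Z m1) else 0) = 1" .
  qed
  finally show ?thesis by (simp add: c_def)
qed




lemma SL_submod:
  fixes X :: "'m \<Rightarrow> 'a" and Y :: "'m \<Rightarrow> 'b" and Z :: "'m \<Rightarrow> 'c"
  assumes S: "finite S"
  shows "SL S (\<lambda>m. (X m, Y m, Z m)) + SL S Z \<le> SL S (\<lambda>m. (X m, Z m)) + SL S (\<lambda>m. (Y m, Z m))"
proof -
  define a where "a m = real (cnt S (\<lambda>m. (X m, Z m)) m)" for m
  define b where "b m = real (cnt S (\<lambda>m. (Y m, Z m)) m)" for m
  define c where "c m = real (cnt S (\<lambda>m. (X m, Y m, Z m)) m)" for m
  define e where "e m = real (cnt S Z m)" for m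
  define N where "N = real (card S)"
  have pos: "0 < a m" "0 < b m" "0 < c m" "0 < e m" if "m \<in> S" for m
    using cnt_pos[OF S that] unfolding a_def b_def c_def e_def by auto
  have Npos: "0 < N" if "m \<in> S" for m using S that by (auto simp: N_def card_gt_0_iff)
  have pt: "1 - a m * b m / (c m * e m) \<le>
      ln (N / a m) + ln (N / b m) - ln (N / c m) - ln (N / e m)" if m: "m \<in> S" for m
  proof -
    note p = pos[OF m] Npos[OF m]
    have "ln (a m * b m / (c m * e m)) \<le> a m * b m / (c m * e m) - 1"
      using p by (intro ln_le_minus_one) simp
    moreover have "ln (a m * b m / (c m * e m)) = ln (a m) + ln (b m) - ln (c m) - ln (e m)"
      using p by (simp add: ln_div ln_mult)
    moreover have "ln (N / a m) + ln (N / b m) - ln (N / c m) - ln (N / e m) = ln (c m) + ln (e m) - ln (a m) - ln (b m)"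
      using p by (simp add: ln_div)
    ultimately show ?thesis by linarith
  qed
  have "(\<Sum>m\<in>S. 1 - a m * b m / (c m * e m)) \<le>
       (\<Sum>m\<in>S. ln (N / a m) + ln (N / b m) - ln (N / c m) - ln (N / e m))"
    by (rule sum_mono) (rule pt)
  moreover have "(\<Sum>m\<in>S. 1 - a m * b m / (c m * e m)) = N - (\<Sum>m\<in>S. a m * b m / (c m * e m))"
    by (simp add: sum_subtractf N_def)
  moreover have "(\<Sum>m\<in>S. a m * b m / (c m * e m)) \<le> N"
    unfolding a_def b_def c_def e_def N_def by (rule key_sum[OF S])
  ultimately have "0 \<le> (\<Sum>m\<in>S. ln (N / a m) + ln (N / b m) - ln (N / c m) - ln (N / e m))" by linarith
  then show ?thesis
    unfolding SL_def a_def b_def c_def e_def N_def by (simp add: sum.distrib sum_subtractf)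
qed




definition RV :: "('a \<Rightarrow> 'm \<Rightarrow> 'b) \<Rightarrow> 'a set \<Rightarrow> 'm \<Rightarrow> 'a \<Rightarrow> 'b option" where
  "RV v A m = (\<lambda>a. if a \<in> A then Some (v a m) else None)"

lemma RV_eq: "RV v A m1 = RV v A m2 \<longleftrightarrow> (\<forall>a\<in>A. v a m1 = v a m2)"
proof
  assume "RV v A m1 = RV v A m2"
  then have "\<And>a. RV v A m1 a = RV v A m2 a" by simp
  then show "\<forall>a\<in>A. v a m1 = v a m2" unfolding RV_def by (metis option.inject)
next
  assume "\<forall>a\<in>A. v a m1 = v a m2"
  then show "RV v A m1 = RV v A m2" unfolding RV_def by (auto simp: fun_eq_iff)
qed

definition hv :: "'m set \<Rightarrow> ('a \<Rightarrow> 'm \<Rightarrow> 'b) \<Rightarrow> 'a set \<Rightarrow> real" where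
  "hv S v A = SL S (RV v A)"

lemma hv_empty: "hv S v {} = 0"
  unfolding hv_def by (rule SL_const[where c="\<lambda>a. None"]) (simp add: RV_def)

lemma hv_mono: assumes "finite S" "A \<subseteq> B" shows "hv S v A \<le> hv S v B"
proof -
  have "SL S (RV v A) \<le> SL S (\<lambda>m. (RV v A m, RV v B m))" by (rule SL_mono[OF assms(1)])
  also have "\<dots> = SL S (RV v B)"
    by (rule SL_cong) (use assms(2) in \<open>auto simp: RV_eq\<close>)
  finally show ?thesis by (simp add: hv_def)
qed

lemma hv_nonneg: "finite S \<Longrightarrow> 0 \<le> hv S v A"
  unfolding hv_def by (rule SL_nonneg)

lemma hv_submod: assumes "finite S"
  shows "hv S v (A \<union> B) + hv S v (A \<inter> B) \<le> hv S v A + hv S v B"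
proof -
  have "SL S (\<lambda>m. (RV v A m, RV v B m, RV v (A \<inter> B) m)) + SL S (RV v (A \<inter> B))
     \<le> SL S (\<lambda>m. (RV v A m, RV v (A \<inter> B) m)) + SL S (\<lambda>m. (RV v B m, RV v (A \<inter> B) m))"
    by (rule SL_submod[OF assms])
  moreover have "SL S (\<lambda>m. (RV v A m, RV v B m, RV v (A \<inter> B) m)) = SL S (RV v (A \<union> B))"
    by (rule SL_cong) (auto simp: RV_eq)
  moreover have "SL S (\<lambda>m. (RV v A m, RV v (A \<inter> B) m)) = SL S (RV v A)"
    by (rule SL_cong) (auto simp: RV_eq)
  moreover have "SL S (\<lambda>m. (RV v B m, RV v (A \<inter> B) m)) = SL S (RV v B)"
    by (rule SL_cong) (auto simp: RV_eq)
  ultimately show ?thesis by (simp add: hv_def)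
qed

lemma hv_dep:
  assumes "\<And>m1 m2. m1 \<in> S \<Longrightarrow> m2 \<in> S \<Longrightarrow> (\<forall>a\<in>X. v a m1 = v a m2) \<Longrightarrow> (\<forall>a\<in>Y. v a m1 = v a m2)"
  shows "hv S v (X \<union> Y) = hv S v X"
  unfolding hv_def proof (rule SL_cong)
  fix m1 m2 assume "m1 \<in> S" "m2 \<in> S"
  then show "(RV v (X \<union> Y) m1 = RV v (X \<union> Y) m2) = (RV v X m1 = RV v X m2)"
    unfolding RV_eq using assms by blast
qed

lemma hv_single: "hv S v {a} = SL S (v a)"
  unfolding hv_def by (rule SL_cong) (simp add: RV_eq)

lemma hv_inj:
  assumes "finite S" "\<And>m1 m2. m1 \<in> S \<Longrightarrow> m2 \<in> S \<Longrightarrow> (\<forall>a\<in>X. v a m1 = v a m2) \<Longrightarrow> m1 = m2"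
  shows "hv S v X = real (card S) * ln (real (card S))"
  unfolding hv_def by (rule SL_inj[OF assms(1)]) (unfold inj_on_def RV_eq, use assms(2) in blast)




datatype atom = Wn nat | Ms nat nat

definition eps :: "nat \<Rightarrow> real \<Rightarrow> nat \<Rightarrow> nat \<Rightarrow> real" where
  "eps p t k d = (if t = 0 then 1/6 else if p + 2 \<le> k then t / 6
     else ((real d - real k + 1) - (real d - real k + 2) * t) / (4 * (real d - real k + 1) + 4))"

locale rc =
  fixes h :: "atom set \<Rightarrow> real" and k d :: nat and \<alpha> \<beta> Bv :: real
  assumes h_empty: "h {} = 0"
  and h_mono: "A \<subseteq> B \<Longrightarrow> h A \<le> h B"
  and h_sub: "h (A \<union> B) + h (A \<inter> B) \<le> h A + h B"
  and hW: "i \<in> {1..d+1} \<Longrightarrow> h {Wn i} \<le> \<alpha>"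
  and hM: "y \<in> {1..d+1} \<Longrightarrow> x \<in> {1..d+1} \<Longrightarrow> x \<noteq> y \<Longrightarrow> h {Ms y x} \<le> \<beta>"
  and dM: "y \<in> {1..d+1} \<Longrightarrow> x \<in> {1..d+1} \<Longrightarrow> x \<noteq> y \<Longrightarrow> h ({Wn x} \<union> {Ms y x}) = h {Wn x}"
  and dW: "y \<in> {1..d+1} \<Longrightarrow> P \<subseteq> {1..d+1} \<Longrightarrow> y \<notin> P \<Longrightarrow>
      h (Wn ` P \<union> Ms y ` ({1..d+1} - P - {y}) \<union> {Wn y}) = h (Wn ` P \<union> Ms y ` ({1..d+1} - P - {y}))"
  and hdata: "K \<subseteq> {1..d+1} \<Longrightarrow> card K = k \<Longrightarrow> h (Wn ` K) = Bv"
  and kd: "k \<le> d" and k1: "1 \<le> k" and bpos: "0 < \<beta>"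
begin

abbreviation "N \<equiv> {1..d+1}"

definition cc :: "nat \<Rightarrow> real" where "cc i = min \<alpha> ((real d - real i + 1) * \<beta>)"

definition "Dl = Bhat k d \<alpha> \<beta> - Bv"

lemma Bhat_cc: "Bhat k d \<alpha> \<beta> = (\<Sum>i=1..k. cc i)"
  by (simp add: Bhat_def cc_def)

lemma h_nonneg: "0 \<le> h A"
  using h_mono[of "{}" A] h_empty by simp

lemma h_subadd: "h (A \<union> B) \<le> h A + h B"
  using h_sub[of A B] h_nonneg[of "A \<inter> B"] by linarith

lemma dt_ext: assumes "h (X \<union> Y) = h X" shows "h (X \<union> Y \<union> K) = h (X \<union> K)"
proof -
  have e: "(X \<union> Y) \<union> (X \<union> K) = X \<union> Y \<union> K" by auto
  have "h (X \<union> Y \<union> K) + h ((X \<union> Y) \<inter> (X \<union> K)) \<le> h (X \<union> Y) + h (X \<union> K)"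
    using h_sub[of "X \<union> Y" "X \<union> K"] unfolding e .
  moreover have "h X \<le> h ((X \<union> Y) \<inter> (X \<union> K))" by (rule h_mono) auto
  moreover have "h (X \<union> K) \<le> h (X \<union> Y \<union> K)" by (rule h_mono) auto
  ultimately show ?thesis using assms by linarith
qed

lemma hc_anti: assumes "C \<subseteq> C'" shows "h (X \<union> C') - h C' \<le> h (X \<union> C) - h C"
proof -
  have e: "(X \<union> C) \<union> C' = X \<union> C'" using assms by auto
  have "h (X \<union> C') + h ((X \<union> C) \<inter> C') \<le> h (X \<union> C) + h C'"
    using h_sub[of "X \<union> C" C'] unfolding e .
  moreover have "h C \<le> h ((X \<union> C) \<inter> C')" by (rule h_mono) (use assms in auto)
  ultimately show ?thesis by linarith
qed

lemma hc_single_le: "h (X \<union> C) - h C \<le> h X"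
  using h_subadd[of X C] by linarith

lemma hMs_card: assumes "y \<in> N" "Ot \<subseteq> N" "y \<notin> Ot" shows "h (Ms y ` Ot) \<le> real (card Ot) * \<beta>"
proof -
  have "finite Ot" using assms(2) finite_subset by blast
  then show ?thesis using assms(2,3)
  proof (induction Ot rule: finite_induct)
    case empty then show ?case by (simp add: h_empty)
  next
    case (insert x F)
    have "h (Ms y ` insert x F) = h ({Ms y x} \<union> Ms y ` F)" by simp
    also have "\<dots> \<le> h {Ms y x} + h (Ms y ` F)" by (rule h_subadd)
    also have "\<dots> \<le> \<beta> + real (card F) * \<beta>"
      using hM[of y x] insert assms(1) by (intro add_mono) auto
    finally show ?case using insert by (simp add: algebra_simps)
  qed
qed

lemma card_O: assumes "P \<subseteq> N" "y \<in> N" "y \<notin> P"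
  shows "card (N - P - {y}) = d - card P" "card P \<le> d"
proof -
  have fP: "finite P" using assms(1) finite_subset by blast
  have "card (N - P) = d + 1 - card P" using assms(1) fP by (simp add: card_Diff_subset)
  moreover have "card (insert y P) \<le> card N" using assms by (intro card_mono) auto
  ultimately show "card (N - P - {y}) = d - card P" "card P \<le> d" using assms fP by (auto simp: card_Diff_singleton)
qed

lemma step_upper: assumes "P \<subseteq> N" "y \<in> N" "y \<notin> P"
  shows "h (Wn ` P \<union> {Wn y}) - h (Wn ` P) \<le> cc (card P + 1)"
proof -
  define Ot where "Ot = N - P - {y}"
  have a: "h (Wn ` P \<union> {Wn y}) - h (Wn ` P) \<le> \<alpha>"
    using hc_single_le[of "{Wn y}" "Wn ` P"] hW[of y] assms by (simp add: Un_commute)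
  have "h (Wn ` P \<union> {Wn y}) \<le> h (Wn ` P \<union> Ms y ` Ot \<union> {Wn y})" by (rule h_mono) auto
  also have "\<dots> = h (Wn ` P \<union> Ms y ` Ot)" unfolding Ot_def by (rule dW) (use assms in auto)
  also have "\<dots> \<le> h (Wn ` P) + h (Ms y ` Ot)" by (rule h_subadd)
  also have "\<dots> \<le> h (Wn ` P) + real (card Ot) * \<beta>"
    using hMs_card[of y Ot] assms by (auto simp: Ot_def)
  finally have b: "h (Wn ` P \<union> {Wn y}) - h (Wn ` P) \<le> (real d - real (card P)) * \<beta>"
    using card_O[OF assms] by (simp add: Ot_def of_nat_diff)
  show ?thesis using a b by (simp add: cc_def)
qed

lemma chain_upper: assumes "Q \<subseteq> N" "R \<subseteq> N - Q"
  shows "h (Wn ` (Q \<union> R)) - h (Wn ` Q) \<le> (\<Sum>i=card Q + 1..card Q + card R. cc i)"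
proof -
  have "finite R" using assms(2) finite_subset by blast
  then show ?thesis using assms(2)
  proof (induction R rule: finite_induct)
    case empty then show ?case by simp
  next
    case (insert y F)
    have fQ: "finite Q" using assms(1) finite_subset by blast
    have cQF: "card (Q \<union> F) = card Q + card F"
      using insert fQ by (subst card_Un_disjoint) auto
    have "h (Wn ` (Q \<union> F) \<union> {Wn y}) - h (Wn ` (Q \<union> F)) \<le> cc (card (Q \<union> F) + 1)"
      by (rule step_upper) (use insert assms in auto)
    moreover have "Wn ` (Q \<union> insert y F) = Wn ` (Q \<union> F) \<union> {Wn y}" by auto
    moreover have "(\<Sum>i=card Q + 1..card Q + card (insert y F). cc i)
        = (\<Sum>i=card Q + 1..card Q + card F. cc i) + cc (card Q + card F + 1)"
      using insert by simp
    ultimately show ?case using insert cQF by simp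
  qed
qed


lemma sum_split3: assumes "j < k"
  shows "(\<Sum>i=1..k. cc i) = (\<Sum>i=1..j. cc i) + cc (j+1) + (\<Sum>i=j+2..k. cc i)"
proof -
  have "(\<Sum>i=1..j + (k - j). cc i) = (\<Sum>i=1..j. cc i) + (\<Sum>i=j+1..j + (k - j). cc i)"
    by (rule sum.ub_add_nat) simp
  moreover have "(\<Sum>i=j+1..k. cc i) = cc (j+1) + (\<Sum>i=Suc (j+1)..k. cc i)"
    by (rule sum.atLeast_Suc_atMost) (use assms in simp)
  ultimately show ?thesis using assms by simp
qed

lemma step_lower: assumes P: "P \<subseteq> N" and y: "y \<in> N" "y \<notin> P" and Pk: "card P < k"
  shows "cc (card P + 1) - Dl \<le> h (Wn ` P \<union> {Wn y}) - h (Wn ` P)"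
proof -
  define j where "j = card P"
  have fP: "finite P" using P finite_subset by blast
  have "card (N - P - {y}) = d - j" using card_O[OF P y] by (simp add: j_def)
  then have "k - j - 1 \<le> card (N - P - {y})" using kd by simp
  then obtain R where R: "R \<subseteq> N - P - {y}" "card R = k - j - 1" "finite R"
    by (rule obtain_subset_with_card_n)
  define K where "K = P \<union> {y} \<union> R"
  have KN: "K \<subseteq> N" using P y R by (auto simp: K_def)
  have cK: "card K = k"
  proof -
    have "card (P \<union> {y}) = j + 1" using fP y by (simp add: j_def)
    moreover have "card (P \<union> {y} \<union> R) = card (P \<union> {y}) + card R"
      using R fP by (intro card_Un_disjoint) auto
    ultimately show ?thesis using R(2) Pk by (simp add: K_def j_def)
  qed
  have B: "h (Wn ` K) = Bv" by (rule hdata[OF KN cK])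
  have c1: "h (Wn ` ({} \<union> P)) - h (Wn ` {}) \<le> (\<Sum>i=card ({}::nat set) + 1..card ({}::nat set) + card P. cc i)"
    using chain_upper[of "{}" P] P by simp
  have c2: "h (Wn ` ((P \<union> {y}) \<union> R)) - h (Wn ` (P \<union> {y})) \<le> (\<Sum>i=card (P \<union> {y}) + 1..card (P \<union> {y}) + card R. cc i)"
    by (rule chain_upper) (use P y R in auto)
  have cPy: "card (P \<union> {y}) = j + 1" using fP y by (simp add: j_def)
  have e1: "card (P \<union> {y}) + card R = k" using cPy R(2) Pk by (simp add: j_def)
  have "Wn ` (P \<union> {y}) = Wn ` P \<union> {Wn y}" by auto
  then have "Bv \<le> (\<Sum>i=1..j. cc i) + (h (Wn ` P \<union> {Wn y}) - h (Wn ` P)) + (\<Sum>i=j+2..k. cc i)"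
    using c1 c2 B h_empty cPy e1 by (simp add: K_def j_def)
  then show ?thesis using sum_split3[of j] Pk unfolding Dl_def Bhat_cc j_def by linarith
qed

lemma T1: assumes P: "P \<subseteq> N" and y: "y \<in> N" "y \<notin> P" and Pk: "card P < k"
  shows "h (Ms y ` (N - P - {y}) \<union> (Wn ` P \<union> {Wn y})) - h (Wn ` P \<union> {Wn y})
     \<le> (real d - real (card P)) * \<beta> - cc (card P + 1) + Dl"
proof -
  define Ot where "Ot = N - P - {y}"
  have "h (Ms y ` Ot \<union> (Wn ` P \<union> {Wn y})) = h (Wn ` P \<union> Ms y ` Ot \<union> {Wn y})"
    by (intro arg_cong[where f=h]) auto
  also have "\<dots> = h (Wn ` P \<union> Ms y ` Ot)" unfolding Ot_def by (rule dW) (use P y in auto)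
  also have "\<dots> \<le> h (Wn ` P) + h (Ms y ` Ot)" by (rule h_subadd)
  also have "\<dots> \<le> h (Wn ` P) + real (card Ot) * \<beta>"
    using hMs_card[of y Ot] P y by (auto simp: Ot_def)
  finally have a: "h (Ms y ` Ot \<union> (Wn ` P \<union> {Wn y})) \<le> h (Wn ` P) + (real d - real (card P)) * \<beta>"
    using card_O[OF P y] by (simp add: Ot_def of_nat_diff)
  show ?thesis using a step_lower[OF P y Pk] unfolding Ot_def by linarith
qed

lemma T2: assumes P: "P \<subseteq> N" and y: "y \<in> N" "y \<notin> P" and Pk: "card P < k"
  and x: "x \<in> N - P - {y}" and C: "C \<subseteq> Wn ` P \<union> Ms y ` (N - P - {y} - {x})"
  shows "cc (card P + 1) - (real d - real (card P) - 1) * \<beta> - Dl \<le> h ({Ms y x} \<union> C) - h C"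
proof -
  define Ot where "Ot = N - P - {y}"
  define C0 where "C0 = Wn ` P \<union> Ms y ` (Ot - {x})"
  have "h ({Ms y x} \<union> C0) = h (Wn ` P \<union> Ms y ` Ot)"
    using x by (intro arg_cong[where f=h]) (auto simp: C0_def Ot_def)
  also have "\<dots> = h (Wn ` P \<union> Ms y ` Ot \<union> {Wn y})" unfolding Ot_def by (rule dW[symmetric]) (use P y in auto)
  also have "\<dots> \<ge> h (Wn ` P \<union> {Wn y})" by (rule h_mono) auto
  finally have a: "h (Wn ` P \<union> {Wn y}) \<le> h ({Ms y x} \<union> C0)" .
  have "h C0 \<le> h (Wn ` P) + h (Ms y ` (Ot - {x}))" unfolding C0_def by (rule h_subadd)
  also have "\<dots> \<le> h (Wn ` P) + real (card (Ot - {x})) * \<beta>"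
    using hMs_card[of y "Ot - {x}"] P y by (auto simp: Ot_def)
  finally have b: "h C0 \<le> h (Wn ` P) + (real d - real (card P) - 1) * \<beta>"
    using card_O[OF P y] x Pk kd by (simp add: Ot_def of_nat_diff card_Diff_singleton algebra_simps)
  have c: "h ({Ms y x} \<union> C0) - h C0 \<le> h ({Ms y x} \<union> C) - h C"
    by (rule hc_anti) (use C in \<open>auto simp: C0_def Ot_def\<close>)
  show ?thesis using a b c step_lower[OF P y Pk] by linarith
qed


lemma dp: assumes "h (X \<union> U) = h X"
  shows "h (U \<union> C) - h (U \<union> C \<union> Y) \<le> h (X \<union> C) - h (X \<union> C \<union> Y)"
proof -
  have e1: "h (X \<union> U \<union> C) = h (X \<union> C)" by (rule dt_ext[OF assms])
  have e2: "h (X \<union> U \<union> (C \<union> Y)) = h (X \<union> (C \<union> Y))" by (rule dt_ext[OF assms])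
  have s: "h ((X \<union> U \<union> C) \<union> (U \<union> C \<union> Y)) + h ((X \<union> U \<union> C) \<inter> (U \<union> C \<union> Y)) \<le> h (X \<union> U \<union> C) + h (U \<union> C \<union> Y)"
    by (rule h_sub)
  have e3: "(X \<union> U \<union> C) \<union> (U \<union> C \<union> Y) = X \<union> U \<union> (C \<union> Y)" by auto
  have m: "h (U \<union> C) \<le> h ((X \<union> U \<union> C) \<inter> (U \<union> C \<union> Y))" by (rule h_mono) auto
  have e4: "X \<union> (C \<union> Y) = X \<union> C \<union> Y" by auto
  show ?thesis using s m e1 e2 unfolding e3 e4 by linarith
qed

lemma cond_sub: "h (U \<union> V \<union> K) - h K \<le> (h (U \<union> K) - h K) + (h (V \<union> K) - h K)"
proof -
  have e: "(U \<union> K) \<union> (V \<union> K) = U \<union> V \<union> K" by auto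
  have "h (U \<union> V \<union> K) + h ((U \<union> K) \<inter> (V \<union> K)) \<le> h (U \<union> K) + h (V \<union> K)"
    using h_sub[of "U \<union> K" "V \<union> K"] unfolding e .
  moreover have "h K \<le> h ((U \<union> K) \<inter> (V \<union> K))" by (rule h_mono) auto
  ultimately show ?thesis by linarith
qed

lemma hcong: "A = B \<Longrightarrow> h A = h B" by simp

lemma main_case:
  fixes A :: "nat set" and y z x a pp :: nat and tt :: real
  assumes A: "A \<subseteq> N" "card A + 1 = pp"
    and nodes: "y \<in> N" "z \<in> N" "x \<in> N" "a \<in> N"
    and notA: "y \<notin> A" "z \<notin> A" "x \<notin> A" "a \<notin> A"
    and dist: "y \<noteq> z" "y \<noteq> x" "y \<noteq> a" "z \<noteq> x" "z \<noteq> a" "x \<noteq> a"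
    and ppk: "pp + 2 \<le> k"
    and al: "\<alpha> = (real d - real pp + 1 - tt) * \<beta>" and tt: "0 < tt" "tt \<le> 1"
  shows "tt * \<beta> \<le> 6 * Dl"
proof -
  have fA: "finite A" using A(1) finite_subset by blast
  have q1: "\<alpha> - (real d - real pp) * \<beta> = (1 - tt) * \<beta>" by (simp add: al algebra_simps)
  have q2: "0 \<le> (1 - tt) * \<beta>" using tt bpos by simp
  have cc1: "cc (pp + 1) = (real d - real pp) * \<beta>"
    using q1 q2 by (simp add: cc_def min_def)
  have q3: "(real d - real pp - 1) * \<beta> = (real d - real pp) * \<beta> - \<beta>" by (simp add: algebra_simps)
  have q4: "(real d - real pp - 1) * \<beta> \<le> \<alpha>" using q1 q2 q3 bpos by linarith
  have cc2: "cc (pp + 2) = (real d - real pp - 1) * \<beta>"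
  proof -
    have "real d - real (pp + 2) + 1 = real d - real pp - 1" by simp
    then show ?thesis using q4 by (simp add: cc_def min_def)
  qed
  define C where "C = Wn ` A"
  define CYZ where "CYZ = Wn ` (A \<union> {y, z})"
  define CAY where "CAY = Wn ` (A \<union> {a, y})"
  define U where "U = Ms y x"
  define V where "V = Ms z x"
  have cAz: "card (A \<union> {z}) = pp" "card (A \<union> {y}) = pp" "card (A \<union> {a}) = pp"
    using fA notA A(2) by auto
  have cAyz: "card (A \<union> {y, z}) = pp + 1" "card (A \<union> {a, y}) = pp + 1"
    using fA notA dist A(2) by auto
  have F1: "h ({Wn x} \<union> C) - h C \<le> \<alpha>"
    using hc_single_le[of "{Wn x}" C] hW[OF nodes(3)] by linarith
  have F2: "cc (pp + 2) - Dl \<le> h (CYZ \<union> {Wn x}) - h CYZ"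
    using step_lower[of "A \<union> {y, z}" x] A nodes notA dist ppk cAyz unfolding CYZ_def by auto
  have F3: "h ({U} \<union> CYZ) - h CYZ \<le> Dl"
  proof -
    have t: "h (Ms y ` (N - (A \<union> {z}) - {y}) \<union> (Wn ` (A \<union> {z}) \<union> {Wn y})) - h (Wn ` (A \<union> {z}) \<union> {Wn y})
       \<le> (real d - real (card (A \<union> {z}))) * \<beta> - cc (card (A \<union> {z}) + 1) + Dl"
      by (rule T1) (use A nodes notA dist ppk cAz in auto)
    have e: "Wn ` (A \<union> {z}) \<union> {Wn y} = CYZ" unfolding CYZ_def by auto
    have m: "h ({U} \<union> CYZ) \<le> h (Ms y ` (N - (A \<union> {z}) - {y}) \<union> CYZ)"
      by (rule h_mono) (use nodes notA dist in \<open>auto simp: U_def\<close>)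
    show ?thesis using t m cc1 cAz unfolding e by simp
  qed
  have F4: "h ({V} \<union> CYZ) - h CYZ \<le> Dl"
  proof -
    have t: "h (Ms z ` (N - (A \<union> {y}) - {z}) \<union> (Wn ` (A \<union> {y}) \<union> {Wn z})) - h (Wn ` (A \<union> {y}) \<union> {Wn z})
       \<le> (real d - real (card (A \<union> {y}))) * \<beta> - cc (card (A \<union> {y}) + 1) + Dl"
      by (rule T1) (use A nodes notA dist ppk cAz in auto)
    have e: "Wn ` (A \<union> {y}) \<union> {Wn z} = CYZ" unfolding CYZ_def by auto
    have m: "h ({V} \<union> CYZ) \<le> h (Ms z ` (N - (A \<union> {y}) - {z}) \<union> CYZ)"
      by (rule h_mono) (use nodes notA dist in \<open>auto simp: V_def\<close>)
    show ?thesis using t m cc1 cAz unfolding e by simp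
  qed
  have F5: "\<beta> - Dl \<le> h ({U} \<union> C) - h C"
  proof -
    have t: "cc (card (A \<union> {a}) + 1) - (real d - real (card (A \<union> {a})) - 1) * \<beta> - Dl \<le> h ({Ms y x} \<union> C) - h C"
      by (rule T2) (use A nodes notA dist ppk cAz in \<open>auto simp: C_def\<close>)
    then show ?thesis using cc1 cAz by (simp add: U_def algebra_simps)
  qed
  have F6: "h ({U} \<union> CAY) - h CAY \<le> Dl"
  proof -
    have t: "h (Ms y ` (N - (A \<union> {a}) - {y}) \<union> (Wn ` (A \<union> {a}) \<union> {Wn y})) - h (Wn ` (A \<union> {a}) \<union> {Wn y})
       \<le> (real d - real (card (A \<union> {a}))) * \<beta> - cc (card (A \<union> {a}) + 1) + Dl"
      by (rule T1) (use A nodes notA dist ppk cAz in auto)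
    have e: "Wn ` (A \<union> {a}) \<union> {Wn y} = CAY" unfolding CAY_def by auto
    have m: "h ({U} \<union> CAY) \<le> h (Ms y ` (N - (A \<union> {a}) - {y}) \<union> CAY)"
      by (rule h_mono) (use nodes notA dist in \<open>auto simp: U_def\<close>)
    show ?thesis using t m cc1 cAz unfolding e by simp
  qed
  have F7: "\<beta> - Dl \<le> h ({V} \<union> CAY) - h CAY"
  proof -
    have t: "cc (card (A \<union> {a, y}) + 1) - (real d - real (card (A \<union> {a, y})) - 1) * \<beta> - Dl \<le> h ({Ms z x} \<union> CAY) - h CAY"
      by (rule T2) (use A nodes notA dist ppk cAyz in \<open>auto simp: CAY_def\<close>)
    then show ?thesis using cc2 cAyz by (simp add: V_def algebra_simps)
  qed
  have dep: "h ({Wn x} \<union> {U, V}) = h {Wn x}"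
  proof -
    have d1: "h ({Wn x} \<union> {U}) = h {Wn x}" unfolding U_def by (rule dM) (use nodes dist in auto)
    have d2: "h ({Wn x} \<union> {V}) = h {Wn x}" unfolding V_def by (rule dM) (use nodes dist in auto)
    have "h ({Wn x} \<union> {U} \<union> {V}) = h ({Wn x} \<union> {V})" by (rule dt_ext[OF d1])
    moreover have "{Wn x} \<union> {U} \<union> {V} = {Wn x} \<union> {U, V}" by auto
    ultimately show ?thesis using d2 by simp
  qed
  have G1: "h ({U, V} \<union> C) - h ({U, V} \<union> C \<union> Wn ` {y, z}) \<le> h ({Wn x} \<union> C) - h ({Wn x} \<union> C \<union> Wn ` {y, z})"
    by (rule dp[OF dep])
  have e1: "{U, V} \<union> C \<union> Wn ` {y, z} = {U} \<union> {V} \<union> CYZ" unfolding C_def CYZ_def by auto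
  have e2: "{Wn x} \<union> C \<union> Wn ` {y, z} = CYZ \<union> {Wn x}" unfolding C_def CYZ_def by auto
  have G2: "h ({U} \<union> {V} \<union> CYZ) - h CYZ \<le> 2 * Dl"
    using cond_sub[of "{U}" "{V}" CYZ] F3 F4 by linarith
  have G3: "2 * \<beta> - 3 * Dl \<le> h ({U, V} \<union> C) - h C"
  proof -
    have e3: "{U, V} \<union> C = {V} \<union> ({U} \<union> C)" by auto
    have a1: "h ({V} \<union> ({U} \<union> C \<union> CAY)) - h ({U} \<union> C \<union> CAY) \<le> h ({V} \<union> ({U} \<union> C)) - h ({U} \<union> C)"
      by (rule hc_anti) auto
    have e4: "{U} \<union> C \<union> CAY = {U} \<union> CAY" unfolding C_def CAY_def by auto
    have a2: "h ({V} \<union> CAY) \<le> h ({V} \<union> ({U} \<union> CAY))" by (rule h_mono) auto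
    show ?thesis using a1 a2 F5 F6 F7 unfolding e3 e4 by linarith
  qed
  have CYZeq: "h (C \<union> Wn ` {y, z}) = h CYZ" by (rule hcong) (auto simp: C_def CYZ_def)
  have "2 * \<beta> - 3 * Dl - 2 * Dl \<le> \<alpha> - (cc (pp + 2) - Dl)"
    using G1 G2 G3 F1 F2 unfolding e1 e2 by linarith
  moreover have "\<alpha> - cc (pp + 2) = (2 - tt) * \<beta>"
  proof -
    have "\<alpha> - cc (pp + 2) = \<alpha> - (real d - real pp - 1) * \<beta>" using cc2 by simp
    also have "\<dots> = (2 - tt) * \<beta>" by (simp add: al algebra_simps)
    finally show ?thesis .
  qed
  ultimately show ?thesis by (simp add: algebra_simps)
qed


lemma sum_I:
  assumes "finite Z"
  shows "(\<Sum>z\<in>Z. (h (U \<union> C) - h C) - (h (U \<union> f z \<union> C) - h (f z \<union> C)))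
    \<le> ((h (U \<union> C) - h C) - (h (U \<union> (\<Union>z\<in>Z. f z) \<union> C) - h ((\<Union>z\<in>Z. f z) \<union> C)))
       + (\<Sum>z\<in>Z. h (f z \<union> C) - h C) - (h ((\<Union>z\<in>Z. f z) \<union> C) - h C)"
  using assms
proof (induction Z rule: finite_induct)
  case empty then show ?case by simp
next
  case (insert z0 F)
  define G where "G = (\<Union>z\<in>F. f z)"
  define v where "v = f z0"
  have eG: "(\<Union>z\<in>insert z0 F. f z) = v \<union> G" by (simp add: G_def v_def)
  have s: "h (U \<union> G \<union> v \<union> C) + h (U \<union> C) \<le> h (U \<union> v \<union> C) + h (U \<union> G \<union> C)"
  proof -
    have e: "(U \<union> v \<union> C) \<union> (U \<union> G \<union> C) = U \<union> G \<union> v \<union> C" by auto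
    have "h (U \<union> G \<union> v \<union> C) + h ((U \<union> v \<union> C) \<inter> (U \<union> G \<union> C)) \<le> h (U \<union> v \<union> C) + h (U \<union> G \<union> C)"
      using h_sub[of "U \<union> v \<union> C" "U \<union> G \<union> C"] unfolding e .
    moreover have "h (U \<union> C) \<le> h ((U \<union> v \<union> C) \<inter> (U \<union> G \<union> C))" by (rule h_mono) auto
    ultimately show ?thesis by linarith
  qed
  have e1: "h (U \<union> (v \<union> G) \<union> C) = h (U \<union> G \<union> v \<union> C)" by (rule hcong) auto
  have e2: "h ((v \<union> G) \<union> C) = h (G \<union> v \<union> C)" by (rule hcong) auto
  have e3: "h (U \<union> G \<union> C) = h (U \<union> G \<union> C)" ..
  show ?case using insert.IH insert.hyps s unfolding eG e1 e2
    by (simp add: G_def v_def[symmetric] algebra_simps)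
qed


lemma near_msr:
  fixes A :: "nat set" and y x :: nat and tt :: real
  assumes A: "A \<subseteq> N" "card A + 3 = k"
    and nodes: "y \<in> N" "x \<in> N" "y \<notin> A" "x \<notin> A" "y \<noteq> x"
    and al: "\<alpha> = (real d - real k + 2 - tt) * \<beta>" and tt: "0 \<le> tt" "tt < 1"
  shows "(real d - real k + 1 - (real d - real k + 2) * tt) * \<beta> \<le> (4 * (real d - real k + 1) + 4) * Dl"
proof -
  define m where "m = real d - real k + 1"
  have fA: "finite A" using A(1) finite_subset by blast
  define Z where "Z = N - A - {x, y}"
  have fZ: "finite Z" by (simp add: Z_def)
  have cZ: "card Z = d - k + 2"
  proof -
    have "card (N - A) = d + 1 - card A" using A(1) fA by (simp add: card_Diff_subset)
    moreover have "N - A - {x, y} = (N - A) - {x, y}" by auto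
    moreover have "card ((N - A) - {x, y}) = card (N - A) - 2"
      using nodes by (subst card_Diff_subset) auto
    ultimately show ?thesis using A(2) kd by (simp add: Z_def)
  qed
  have rcZ: "real (card Z) = m + 1" using cZ kd by (simp add: m_def of_nat_diff)
  have m1: "1 \<le> m" using kd by (simp add: m_def)
  have c2: "2 \<le> card Z" using cZ kd by simp
  then have "Z \<noteq> {}" by auto
  then obtain z0 where z0: "z0 \<in> Z" by auto
  have "card (Z - {z0}) \<ge> 1" using c2 z0 fZ by (simp add: card_Diff_singleton)
  then have "Z - {z0} \<noteq> {}" by (metis card.empty not_one_le_zero)
  then obtain z1 where "z1 \<in> Z - {z0}" by auto
  then have z01: "z0 \<in> Z" "z1 \<in> Z" "z0 \<noteq> z1" using z0 by auto
  have Zn: "z \<in> N" "z \<notin> A" "z \<noteq> x" "z \<noteq> y" if "z \<in> Z" for z using that by (auto simp: Z_def)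
  have ccA: "cc (k - 1) = \<alpha>"
  proof -
    have e: "real d - real (k - 1) + 1 = real d - real k + 2" using A(2) by (simp add: of_nat_diff)
    have le: "\<alpha> \<le> (real d - real k + 2) * \<beta>"
    proof -
      have "0 \<le> tt * \<beta>" using tt bpos by simp
      moreover have "\<alpha> = (real d - real k + 2) * \<beta> - tt * \<beta>" by (simp add: al algebra_simps)
      ultimately show ?thesis by linarith
    qed
    show ?thesis unfolding cc_def e using le by (simp add: min_def)
  qed
  have ccB: "cc k = m * \<beta>"
  proof -
    have "\<alpha> - m * \<beta> = (1 - tt) * \<beta>" by (simp add: al m_def algebra_simps)
    moreover have "0 \<le> (1 - tt) * \<beta>" using tt bpos by simp
    ultimately show ?thesis by (simp add: cc_def min_def m_def)
  qed
  define C where "C = Wn ` (A \<union> {y})"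
  define WA where "WA = Wn ` A"
  define U where "U = Ms y x"
  define D where "D = h ({U} \<union> C) - h C"
  have cAy: "card (A \<union> {y}) = k - 2" "card (A \<union> {x}) = k - 2" using fA nodes A(2) by auto
  have cAyz: "card (A \<union> {y, z}) = k - 1" if "z \<in> Z" for z using fA nodes A(2) Zn[OF that] by auto
  have F1: "\<beta> - 2 * Dl \<le> D"
  proof -
    have cP: "card (A \<union> {z0, z1}) = k - 1" using fA z01 Zn[OF z01(1)] Zn[OF z01(2)] A(2) by auto
    have t: "cc (card (A \<union> {z0, z1}) + 1) - (real d - real (card (A \<union> {z0, z1})) - 1) * \<beta> - Dl
        \<le> h ({Ms y x} \<union> WA) - h WA"
      by (rule T2) (use A nodes z01 Zn[OF z01(1)] Zn[OF z01(2)] cP in \<open>auto simp: WA_def\<close>)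
    have ta: "\<beta> - Dl \<le> h ({U} \<union> WA) - h WA"
    proof -
      have "card (A \<union> {z0, z1}) + 1 = k" using cP A(2) by simp
      moreover have "real d - real (card (A \<union> {z0, z1})) - 1 = m - 1" using cP A(2) by (simp add: m_def of_nat_diff)
      ultimately show ?thesis using t ccB by (simp add: U_def algebra_simps)
    qed
    have b1: "h ({Wn x} \<union> WA) - h WA \<le> \<alpha>"
      using hc_single_le[of "{Wn x}" WA] hW[OF nodes(2)] by linarith
    have b2: "cc (card (A \<union> {y}) + 1) - Dl \<le> h (Wn ` (A \<union> {y}) \<union> {Wn x}) - h (Wn ` (A \<union> {y}))"
      by (rule step_lower) (use A nodes cAy in auto)
    have kk: "card (A \<union> {y}) + 1 = k - 1" using cAy A(2) by simp
    have b2': "\<alpha> - Dl \<le> h (C \<union> {Wn x}) - h C" using b2 ccA unfolding kk C_def by simp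
    have dxu: "h ({Wn x} \<union> {U}) = h {Wn x}" unfolding U_def by (rule dM) (use nodes in auto)
    have c: "h ({U} \<union> WA) - h ({U} \<union> WA \<union> {Wn y}) \<le> h ({Wn x} \<union> WA) - h ({Wn x} \<union> WA \<union> {Wn y})"
      by (rule dp[OF dxu])
    have e1: "h ({U} \<union> WA \<union> {Wn y}) = h ({U} \<union> C)" by (rule hcong) (auto simp: C_def WA_def)
    have e2: "h ({Wn x} \<union> WA \<union> {Wn y}) = h (C \<union> {Wn x})" by (rule hcong) (auto simp: C_def WA_def)
    have e3: "h (WA \<union> {Wn y}) = h C" by (rule hcong) (auto simp: C_def WA_def)
    have "h C - h WA \<ge> 0" using h_mono[of WA C] by (auto simp: C_def WA_def)
    show ?thesis using ta b1 b2' c e1 e2 unfolding D_def by linarith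
  qed
  have F2: "h ({U} \<union> {Wn z} \<union> C) - h ({Wn z} \<union> C) \<le> tt * \<beta> + Dl" if z: "z \<in> Z" for z
  proof -
    have cz: "card (A \<union> {z}) = k - 2" using fA Zn[OF z] A(2) by auto
    have t: "h (Ms y ` (N - (A \<union> {z}) - {y}) \<union> (Wn ` (A \<union> {z}) \<union> {Wn y})) - h (Wn ` (A \<union> {z}) \<union> {Wn y})
       \<le> (real d - real (card (A \<union> {z}))) * \<beta> - cc (card (A \<union> {z}) + 1) + Dl"
      by (rule T1) (use A nodes Zn[OF z] cz in auto)
    have e: "Wn ` (A \<union> {z}) \<union> {Wn y} = {Wn z} \<union> C" unfolding C_def by auto
    have mo: "h ({U} \<union> ({Wn z} \<union> C)) \<le> h (Ms y ` (N - (A \<union> {z}) - {y}) \<union> ({Wn z} \<union> C))"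
      by (rule h_mono) (use nodes Zn[OF z] in \<open>auto simp: U_def\<close>)
    have v: "(real d - real (card (A \<union> {z}))) * \<beta> - cc (card (A \<union> {z}) + 1) = tt * \<beta>"
    proof -
      have "card (A \<union> {z}) + 1 = k - 1" using cz A(2) by simp
      moreover have "real d - real (card (A \<union> {z})) = real d - real k + 2" using cz A(2) by (simp add: of_nat_diff)
      ultimately show ?thesis using ccA by (simp add: al algebra_simps)
    qed
    have e2: "h ({U} \<union> {Wn z} \<union> C) = h ({U} \<union> ({Wn z} \<union> C))" by (rule hcong) auto
    show ?thesis using t mo v e2 unfolding e by linarith
  qed
  have KZ: "m * \<beta> - Dl \<le> h (Ms x ` (Z - {z}) \<union> C \<union> {Wn z}) - h (C \<union> {Wn z})" if z: "z \<in> Z" for z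
  proof -
    have P: "A \<union> {y, z} \<subseteq> N" using A nodes Zn[OF z] by auto
    have dw: "h (Wn ` (A \<union> {y, z}) \<union> Ms x ` (N - (A \<union> {y, z}) - {x}) \<union> {Wn x})
        = h (Wn ` (A \<union> {y, z}) \<union> Ms x ` (N - (A \<union> {y, z}) - {x}))"
      by (rule dW) (use P nodes Zn[OF z] in auto)
    have e0: "N - (A \<union> {y, z}) - {x} = Z - {z}" by (auto simp: Z_def)
    have e1: "Wn ` (A \<union> {y, z}) = C \<union> {Wn z}" by (auto simp: C_def)
    have sl: "cc (card (A \<union> {y, z}) + 1) - Dl \<le> h (Wn ` (A \<union> {y, z}) \<union> {Wn x}) - h (Wn ` (A \<union> {y, z}))"
      by (rule step_lower) (use P nodes Zn[OF z] cAyz[OF z] A(2) in auto)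
    have cc': "cc (card (A \<union> {y, z}) + 1) = m * \<beta>" using cAyz[OF z] A(2) ccB by simp
    have mo: "h (C \<union> {Wn z} \<union> {Wn x}) \<le> h (C \<union> {Wn z} \<union> Ms x ` (Z - {z}) \<union> {Wn x})" by (rule h_mono) auto
    have e2: "h (Ms x ` (Z - {z}) \<union> C \<union> {Wn z}) = h (C \<union> {Wn z} \<union> Ms x ` (Z - {z}))" by (rule hcong) auto
    show ?thesis using dw sl cc' mo e2 unfolding e0 e1 by linarith
  qed
  define II where "II W K = (h ({U} \<union> K) - h K) - (h ({U} \<union> W \<union> K) - h (W \<union> K))" for W K
  have F3: "II {Wn z} C \<le> II {Ms x z} C + Dl" if z: "z \<in> Z" for z
  proof -
    define K where "K = C \<union> {Ms x z}"
    define Oz where "Oz = Ms x ` (Z - {z})"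
    define Wz where "Wz = {Wn z}"
    have dxu: "h ({Wn x} \<union> {U}) = h {Wn x}" unfolding U_def by (rule dM) (use nodes in auto)
    have dp1: "h ({U} \<union> K) - h ({U} \<union> K \<union> Wz) \<le> h ({Wn x} \<union> K) - h ({Wn x} \<union> K \<union> Wz)"
      by (rule dp[OF dxu])
    have dwx: "h (Oz \<union> K \<union> {Wn x}) = h (Oz \<union> K)"
    proof -
      have P: "A \<union> {y} \<subseteq> N" using A nodes by auto
      have dw: "h (Wn ` (A \<union> {y}) \<union> Ms x ` (N - (A \<union> {y}) - {x}) \<union> {Wn x})
          = h (Wn ` (A \<union> {y}) \<union> Ms x ` (N - (A \<union> {y}) - {x}))"
        by (rule dW) (use P nodes in auto)
      have e: "Wn ` (A \<union> {y}) \<union> Ms x ` (N - (A \<union> {y}) - {x}) = Oz \<union> K"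
        using z by (auto simp: Z_def C_def K_def Oz_def)
      show ?thesis using dw unfolding e .
    qed
    have dp2: "h ({Wn x} \<union> K) - h ({Wn x} \<union> K \<union> Wz) \<le> h ((Oz \<union> K) \<union> K) - h ((Oz \<union> K) \<union> K \<union> Wz)"
      by (rule dp) (rule trans[OF hcong dwx], auto)
    have e1: "(Oz \<union> K) \<union> K = Oz \<union> K" by auto
    have hO0: "h (Ms x ` (Z - {z})) \<le> real (card (Z - {z})) * \<beta>"
      by (rule hMs_card) (use nodes in \<open>auto simp: Z_def\<close>)
    have hO: "h (Oz \<union> K) - h K \<le> real (card (Z - {z})) * \<beta>"
      using hc_single_le[of Oz K] hO0 unfolding Oz_def by linarith
    have cZz: "real (card (Z - {z})) = m"
    proof -
      have "card Z \<ge> 1" using z fZ by (metis card_0_eq empty_iff less_one not_le)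
      then show ?thesis using rcZ z fZ by (simp add: card_Diff_singleton of_nat_diff)
    qed
    have dz: "h ({Wn z} \<union> {Ms x z}) = h {Wn z}" by (rule dM) (use nodes Zn[OF z] in auto)
    have dz1: "h (Oz \<union> K \<union> Wz) = h (Oz \<union> C \<union> {Wn z})"
      using dt_ext[OF dz, of "Oz \<union> C"] by (metis (no_types, lifting) K_def Wz_def hcong sup_assoc sup_commute sup_left_commute)
    have dz2: "h (K \<union> Wz) = h (C \<union> {Wn z})"
      using dt_ext[OF dz, of C] by (metis (no_types, lifting) K_def Wz_def hcong sup_assoc sup_commute sup_left_commute)
    have dz3: "h ({U} \<union> K \<union> Wz) = h ({U} \<union> {Wn z} \<union> C)"
      using dt_ext[OF dz, of "{U} \<union> C"] by (metis (no_types, lifting) K_def Wz_def hcong sup_assoc sup_commute sup_left_commute)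
    have kz: "m * \<beta> - Dl \<le> h (Oz \<union> C \<union> {Wn z}) - h (C \<union> {Wn z})" using KZ[OF z] unfolding Oz_def .
    have eK1: "h ({U} \<union> {Ms x z} \<union> C) = h ({U} \<union> K)" by (rule hcong) (auto simp: K_def)
    have eK2: "h ({Ms x z} \<union> C) = h K" by (rule hcong) (auto simp: K_def)
    have eK3: "h ({Wn z} \<union> C) = h (C \<union> {Wn z})" by (rule hcong) auto
    have hO': "h (Oz \<union> K) - h K \<le> m * \<beta>" using hO cZz by simp
    show ?thesis unfolding II_def using dp1 dp2 hO' dz1 dz2 dz3 kz eK1 eK2 eK3 unfolding e1 by linarith
  qed
  have Lz: "D - tt * \<beta> - Dl \<le> II {Wn z} C" if z: "z \<in> Z" for z
    using F2[OF z] unfolding II_def D_def by linarith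
  have SI: "(\<Sum>z\<in>Z. II {Ms x z} C) \<le> II (\<Union>z\<in>Z. {Ms x z}) C + (\<Sum>z\<in>Z. h ({Ms x z} \<union> C) - h C) - (h ((\<Union>z\<in>Z. {Ms x z}) \<union> C) - h C)"
    unfolding II_def by (rule sum_I[OF fZ])
  have eU: "(\<Union>z\<in>Z. {Ms x z}) = Ms x ` Z" by auto
  have I_le: "II (Ms x ` Z) C \<le> D"
    unfolding II_def D_def using h_mono[of "Ms x ` Z \<union> C" "{U} \<union> Ms x ` Z \<union> C"] by auto
  have sumb: "(\<Sum>z\<in>Z. h ({Ms x z} \<union> C) - h C) \<le> (\<Sum>z\<in>Z. \<beta>)"
  proof (rule sum_mono)
    fix z assume z: "z \<in> Z"
    show "h ({Ms x z} \<union> C) - h C \<le> \<beta>" using hc_single_le[of "{Ms x z}" C] hM[of x z] nodes Zn[OF z] by force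
  qed
  have Vlow: "(m + 1) * \<beta> - 2 * Dl \<le> h (Ms x ` Z \<union> C) - h C"
  proof -
    define O0 where "O0 = Ms x ` (Z - {z0})"
    have e: "Ms x ` Z \<union> C = O0 \<union> ({Ms x z0} \<union> C)" using z01 by (auto simp: O0_def)
    have cP: "card (A \<union> {y, z1}) = k - 1" using cAyz[OF z01(2)] .
    have t: "cc (card (A \<union> {y, z1}) + 1) - (real d - real (card (A \<union> {y, z1})) - 1) * \<beta> - Dl
        \<le> h ({Ms x z0} \<union> C) - h C"
      by (rule T2) (use A nodes z01 Zn[OF z01(1)] Zn[OF z01(2)] cP in \<open>auto simp: C_def\<close>)
    have t': "\<beta> - Dl \<le> h ({Ms x z0} \<union> C) - h C"
    proof -
      have "card (A \<union> {y, z1}) + 1 = k" using cP A(2) by simp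
      moreover have "real d - real (card (A \<union> {y, z1})) - 1 = m - 1" using cP A(2) by (simp add: m_def of_nat_diff)
      ultimately show ?thesis using t ccB by (simp add: algebra_simps)
    qed
    have a1: "h (O0 \<union> ({Ms x z0} \<union> C \<union> {Wn z0})) - h ({Ms x z0} \<union> C \<union> {Wn z0}) \<le> h (O0 \<union> ({Ms x z0} \<union> C)) - h ({Ms x z0} \<union> C)"
      by (rule hc_anti) auto
    have dz: "h ({Wn z0} \<union> {Ms x z0}) = h {Wn z0}" by (rule dM) (use nodes Zn[OF z01(1)] in auto)
    have f1: "h (O0 \<union> ({Ms x z0} \<union> C \<union> {Wn z0})) = h (Ms x ` (Z - {z0}) \<union> C \<union> {Wn z0})"
      using dt_ext[OF dz, of "O0 \<union> C"] unfolding O0_def by (metis (no_types, lifting) hcong sup_assoc sup_commute sup_left_commute)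
    have f2: "h ({Ms x z0} \<union> C \<union> {Wn z0}) = h (C \<union> {Wn z0})"
      using dt_ext[OF dz, of "C"] by (metis (no_types, lifting) hcong sup_assoc sup_commute sup_left_commute)
    show ?thesis using t' a1 f1 f2 KZ[OF z01(1)] unfolding e by (simp add: algebra_simps)
  qed
  have sumZ: "(\<Sum>z\<in>Z. D - tt * \<beta> - 2 * Dl) \<le> (\<Sum>z\<in>Z. II {Ms x z} C)"
    by (rule sum_mono) (use Lz F3 in fastforce)
  have "(m + 1) * (D - tt * \<beta> - 2 * Dl) \<le> D + 2 * Dl"
    using sumZ SI I_le sumb Vlow rcZ unfolding eU by (simp add: algebra_simps)
  then have "m * D \<le> (m + 1) * tt * \<beta> + (2 * m + 4) * Dl" by (simp add: algebra_simps)
  moreover have "m * (\<beta> - 2 * Dl) \<le> m * D" using F1 m1 by (intro mult_left_mono) auto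
  ultimately have "m * \<beta> - (m + 1) * tt * \<beta> \<le> (4 * m + 4) * Dl" by (simp add: algebra_simps)
  then show ?thesis by (simp add: m_def algebra_simps)
qed


lemma gap:
  fixes p :: nat and t :: real
  assumes k3: "3 \<le> k" and p1: "1 \<le> p" and pk: "p \<le> k - 1" and t0: "0 \<le> t" and t1: "t < 1"
    and disj: "(p = 1 \<and> t \<noteq> 0) \<or> (2 \<le> p \<and> p \<le> k - 2) \<or>
         (p = k - 1 \<and> t < (real d - real k + 1) / (real d - real k + 2))"
    and al: "\<alpha> = (real d - real p + 1 - t) * \<beta>"
  shows "eps p t k d * \<beta> \<le> Dl"
proof (cases "t = 0")
  case True
  have p2: "2 \<le> p" using disj True k3 by auto
  define A where "A = {1..p - 2}"
  have cA: "card A + 1 = p - 1" using p2 by (simp add: A_def)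
  have "1 * \<beta> \<le> 6 * Dl"
  proof (rule main_case[where A=A and y="p - 1" and z=p and x="p + 1" and a="p + 2" and pp="p - 1" and tt=1])
    show "A \<subseteq> N" using pk kd by (auto simp: A_def)
  qed (use cA p2 pk kd k3 al True in \<open>auto simp: A_def of_nat_diff\<close>)
  then show ?thesis using True by (simp add: eps_def)
next
  case False
  note tpos = False
  show ?thesis
  proof (cases "p + 2 \<le> k")
    case True
    define A where "A = {1..p - 1}"
    have cA: "card A + 1 = p" using p1 by (simp add: A_def)
    have "t * \<beta> \<le> 6 * Dl"
    proof (rule main_case[where A=A and y=p and z="p + 1" and x="p + 2" and a="p + 3" and pp=p and tt=t])
      show "A \<subseteq> N" using pk kd by (auto simp: A_def)
    qed (use cA p1 True kd k3 al tpos t0 t1 in \<open>auto simp: A_def\<close>)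
    then show ?thesis using tpos True by (simp add: eps_def)
  next
    case False
    have pk1: "p = k - 1" using False pk by simp
    define A where "A = {1..k - 3}"
    have cA: "card A + 3 = k" using k3 by (simp add: A_def)
    have "(real d - real k + 1 - (real d - real k + 2) * t) * \<beta> \<le> (4 * (real d - real k + 1) + 4) * Dl"
    proof (rule near_msr[where A=A and y="k - 2" and x="k - 1" and tt=t])
      show "A \<subseteq> N" using kd by (auto simp: A_def)
      show "\<alpha> = (real d - real k + 2 - t) * \<beta>" using al pk1 k3 by (simp add: of_nat_diff algebra_simps)
    qed (use cA kd k3 t0 t1 in \<open>auto simp: A_def\<close>)
    moreover have "0 < 4 * (real d - real k + 1) + 4" using kd by simp
    ultimately show ?thesis using tpos False
      by (simp add: eps_def divide_le_eq mult.commute mult.left_commute)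
  qed
qed

end



lemma fs_eq: "file_space q B = {xs. set xs \<subseteq> {..<q} \<and> length xs = B}"
  by (auto simp: file_space_def)

lemma fs_finite: "finite (file_space q B)"
  unfolding fs_eq by (rule finite_lists_length_eq) simp

lemma fs_card: "card (file_space q B) = q ^ B"
  unfolding fs_eq by (subst card_lists_length_eq) simp_all

lemma fs_nonempty: "0 < q \<Longrightarrow> replicate B 0 \<in> file_space q B"
  by (auto simp: file_space_def)

definition vv :: "(nat \<Rightarrow> nat \<Rightarrow> nat \<Rightarrow> nat) \<Rightarrow> (nat \<Rightarrow> nat list \<Rightarrow> nat) \<Rightarrow> atom \<Rightarrow> nat list \<Rightarrow> nat" where
  "vv hh W a m = (case a of Wn i \<Rightarrow> W i m | Ms y x \<Rightarrow> hh y x (W x m))"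

lemma vv_Wn: "vv hh W (Wn i) = W i" by (simp add: fun_eq_iff vv_def)
lemma vv_Ms: "vv hh W (Ms y x) = (\<lambda>m. hh y x (W x m))" by (simp add: fun_eq_iff vv_def)

definition repprop :: "nat \<Rightarrow> nat \<Rightarrow> nat \<Rightarrow> real \<Rightarrow> (nat \<Rightarrow> nat list \<Rightarrow> nat) \<Rightarrow> nat \<Rightarrow> nat set \<Rightarrow> (nat \<Rightarrow> nat \<Rightarrow> nat) \<Rightarrow> bool" where
  "repprop q B d \<beta> W y D h \<longleftrightarrow>
     (\<forall>x\<in>D. ent q (file_space q B) (\<lambda>m. h x (W x m)) \<le> \<beta>) \<and>
     (\<forall>m1\<in>file_space q B. \<forall>m2\<in>file_space q B.
        (\<forall>x\<in>D. h x (W x m1) = h x (W x m2)) \<longrightarrow> W y m1 = W y m2)"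

definition hsel where
  "hsel q B d \<beta> W y = (SOME h. repprop q B d \<beta> W y ({1..d+1} - {y}) h)"

lemma hsel_prop:
  assumes "exact_repair_code q n k d \<alpha> \<beta> B W" "d + 1 \<le> n" "y \<in> {1..d+1}"
  shows "repprop q B d \<beta> W y ({1..d+1} - {y}) (hsel q B d \<beta> W y)"
proof -
  have "y \<in> {1..n}" using assms(2,3) by auto
  moreover have "{1..d+1} - {y} \<subseteq> {1..n} - {y}" using assms(2) by auto
  moreover have "card ({1..d+1} - {y}) = d" using assms(3) by simp
  ultimately have "\<exists>h. repprop q B d \<beta> W y ({1..d+1} - {y}) h"
    using assms(1) unfolding exact_repair_code_def repprop_def by blast
  then show ?thesis unfolding hsel_def by (rule someI_ex)
qed

lemma glue:
  assumes pq: "primepow q" and dn: "d + 1 \<le> n" and b: "0 < \<beta>"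
    and code: "exact_repair_code q n k d \<alpha> \<beta> B W" and k1: "1 \<le> k" and kd: "k \<le> d"
  shows "rc (\<lambda>A. ent q (file_space q B) (RV (vv (hsel q B d \<beta> W) W) A)) k d \<alpha> \<beta> (real B)"
proof -
  define S where "S = file_space q B"
  define hh where "hh = hsel q B d \<beta> W"
  define v where "v = vv hh W"
  have fS: "finite S" by (simp add: S_def fs_finite)
  have q1: "1 < q" using primepow_gt_Suc_0[OF pq] by simp
  have cS: "card S = q ^ B" by (simp add: S_def fs_card)
  have Spos: "0 < card S" using cS q1 by simp
  define K0 where "K0 = real (card S) * ln (real q)"
  have K0pos: "0 < K0" using Spos q1 by (simp add: K0_def)
  have hdef: "ent q S (RV v A) = hv S v A / K0" for A
    by (simp add: ent_SL[OF fS] hv_def K0_def)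
  have hsing: "ent q S (RV v {a}) = ent q S (v a)" for a
    using hdef[of "{a}"] hv_single[of S v a] ent_SL[OF fS, of q "v a"] by (simp add: K0_def)
  have rep: "repprop q B d \<beta> W y ({1..d+1} - {y}) (hh y)" if "y \<in> {1..d+1}" for y
    unfolding hh_def by (rule hsel_prop[OF code dn that])
  show ?thesis
    unfolding S_def[symmetric] hh_def[symmetric] v_def[symmetric]
  proof (unfold_locales)
    show "ent q S (RV v {}) = 0" using hdef[of "{}"] hv_empty[of S v] by simp
  next
    fix A B' :: "atom set" assume "A \<subseteq> B'"
    then show "ent q S (RV v A) \<le> ent q S (RV v B')"
      unfolding hdef using hv_mono[OF fS \<open>A \<subseteq> B'\<close>, of v] K0pos by (simp add: divide_right_mono)
  next
    fix A B' :: "atom set"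
    show "ent q S (RV v (A \<union> B')) + ent q S (RV v (A \<inter> B')) \<le> ent q S (RV v A) + ent q S (RV v B')"
      unfolding hdef using hv_submod[OF fS, of v A B'] K0pos by (simp add: add_divide_distrib[symmetric] divide_right_mono)
  next
    fix i assume i: "i \<in> {1..d+1}"
    have "ent q S (W i) \<le> \<alpha>" using code i dn unfolding exact_repair_code_def S_def by auto
    then show "ent q S (RV v {Wn i}) \<le> \<alpha>" using hsing[of "Wn i"] by (simp add: v_def vv_Wn)
  next
    fix y x assume y: "y \<in> {1..d+1}" and x: "x \<in> {1..d+1}" and xy: "x \<noteq> y"
    have "ent q S (\<lambda>m. hh y x (W x m)) \<le> \<beta>" using rep[OF y] x xy unfolding repprop_def S_def by auto
    then show "ent q S (RV v {Ms y x}) \<le> \<beta>" using hsing[of "Ms y x"] by (simp add: v_def vv_Ms)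
  next
    fix y x assume y: "y \<in> {1..d+1}" and x: "x \<in> {1..d+1}" and xy: "x \<noteq> y"
    have "hv S v ({Wn x} \<union> {Ms y x}) = hv S v {Wn x}"
      by (rule hv_dep) (simp add: v_def vv_def)
    then show "ent q S (RV v ({Wn x} \<union> {Ms y x})) = ent q S (RV v {Wn x})" unfolding hdef by simp
  next
    fix y P assume y: "y \<in> {1..d+1}" and P: "P \<subseteq> {1..d+1}" and yP: "y \<notin> P"
    define X where "X = Wn ` P \<union> Ms y ` ({1..d+1} - P - {y})"
    have "hv S v (X \<union> {Wn y}) = hv S v X"
    proof (rule hv_dep)
      fix m1 m2 assume m: "m1 \<in> S" "m2 \<in> S" and eq: "\<forall>a\<in>X. v a m1 = v a m2"
      have "\<forall>x\<in>{1..d+1} - {y}. hh y x (W x m1) = hh y x (W x m2)"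
      proof
        fix x assume x: "x \<in> {1..d+1} - {y}"
        show "hh y x (W x m1) = hh y x (W x m2)"
        proof (cases "x \<in> P")
          case True
          then have "v (Wn x) m1 = v (Wn x) m2" using eq by (auto simp: X_def)
          then show ?thesis by (simp add: v_def vv_def)
        next
          case False
          then have "v (Ms y x) m1 = v (Ms y x) m2" using eq x by (auto simp: X_def)
          then show ?thesis by (simp add: v_def vv_def)
        qed
      qed
      then have "W y m1 = W y m2" using rep[OF y] m unfolding repprop_def S_def by blast
      then show "\<forall>a\<in>{Wn y}. v a m1 = v a m2" by (simp add: v_def vv_def)
    qed
    then show "ent q S (RV v (Wn ` P \<union> Ms y ` ({1..d+1} - P - {y}) \<union> {Wn y})) =
          ent q S (RV v (Wn ` P \<union> Ms y ` ({1..d+1} - P - {y})))" unfolding hdef X_def by simp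
  next
    fix K assume K: "K \<subseteq> {1..d+1}" "card K = k"
    have inj: "m1 = m2" if m: "m1 \<in> S" "m2 \<in> S" and eq: "\<forall>a\<in>Wn ` K. v a m1 = v a m2" for m1 m2
    proof -
      have "K \<subseteq> {1..n}" using K dn by auto
      moreover have "\<forall>a\<in>K. W a m1 = W a m2" using eq by (simp add: v_def vv_def)
      ultimately show ?thesis using code K(2) m unfolding exact_repair_code_def S_def by blast
    qed
    have "hv S v (Wn ` K) = real (card S) * ln (real (card S))" by (rule hv_inj[OF fS inj])
    then have "ent q S (RV v (Wn ` K)) = ln (real (card S)) / ln (real q)"
      unfolding hdef K0_def using Spos by simp
    also have "\<dots> = real B" using cS q1 by (simp add: ln_realpow)
    finally show "ent q S (RV v (Wn ` K)) = real B" .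
  qed (use k1 kd b in auto)
qed




theorem corollary1:
  fixes k d p :: nat and t :: real
  assumes "3 \<le> k" and "k \<le> d"
    and "1 \<le> p" and "p \<le> k - 1"
    and "0 \<le> t" and "t < 1"
    and "(p = 1 \<and> t \<noteq> 0) \<or> (2 \<le> p \<and> p \<le> k - 2) \<or>
         (p = k - 1 \<and> t < (real d - real k + 1) / (real d - real k + 2))"
  shows "\<exists>\<delta>0 > 0. \<forall>(q::nat) (n::nat) (\<alpha>::real) (\<beta>::real) (B::nat) W.
           primepow q \<and> d + 1 \<le> n \<and> 0 < \<alpha> \<and> 0 < \<beta> \<and> 0 < B \<and>
           \<alpha> = (real d - real p + 1 - t) * \<beta> \<and>
           exact_repair_code q n k d \<alpha> \<beta> B W
           \<longrightarrow> \<beta> / real B \<ge> \<beta> / Bhat k d \<alpha> \<beta> + \<delta>0"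
proof -
  note k3 = assms(1) and kd = assms(2) and p1 = assms(3) and pk = assms(4)
    and t0 = assms(5) and t1 = assms(6) and disj = assms(7)
  define \<epsilon> where "\<epsilon> = eps p t k d"
  define \<kappa> where "\<kappa> = (\<Sum>i=1..k. min (real d - real p + 1 - t) (real d - real i + 1))"
  have epos: "0 < \<epsilon>"
  proof (cases "t = 0")
    case True then show ?thesis by (simp add: \<epsilon>_def eps_def)
  next
    case False
    show ?thesis
    proof (cases "p + 2 \<le> k")
      case True then show ?thesis using False t0 by (simp add: \<epsilon>_def eps_def)
    next
      case c2: False
      have pk1: "p = k - 1" using c2 pk by simp
      have tl: "t < (real d - real k + 1) / (real d - real k + 2)" using disj pk1 k3 c2 False by auto
      have dpos: "0 < real d - real k + 2" using kd by simp
      have "t * (real d - real k + 2) < real d - real k + 1" using tl dpos by (simp add: less_divide_eq)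
      then have "0 < (real d - real k + 1) - (real d - real k + 2) * t" by (simp add: algebra_simps)
      moreover have "0 < 4 * (real d - real k + 1) + 4" using kd by simp
      ultimately show ?thesis using False c2 by (simp add: \<epsilon>_def eps_def)
    qed
  qed
  have kpos: "0 < \<kappa>"
  proof -
    have "0 < min (real d - real p + 1 - t) (real d - real i + 1)" if "i \<in> {1..k}" for i
      using that pk kd t1 k3 by (auto simp: of_nat_diff)
    moreover have "{1..k} \<noteq> {}" using k3 by simp
    ultimately show ?thesis unfolding \<kappa>_def by (intro sum_pos) auto
  qed
  show ?thesis
  proof (rule exI[of _ "\<epsilon> / \<kappa>^2"], intro conjI allI impI)
    show "0 < \<epsilon> / \<kappa>^2" using epos kpos by simp
  next
    fix q n :: nat and \<alpha> \<beta> :: real and B :: nat and W :: "nat \<Rightarrow> nat list \<Rightarrow> nat"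
    assume H: "primepow q \<and> d + 1 \<le> n \<and> 0 < \<alpha> \<and> 0 < \<beta> \<and> 0 < B \<and>
           \<alpha> = (real d - real p + 1 - t) * \<beta> \<and> exact_repair_code q n k d \<alpha> \<beta> B W"
    then have pq: "primepow q" and dn: "d + 1 \<le> n" and b: "0 < \<beta>" and Bp: "0 < B"
      and al: "\<alpha> = (real d - real p + 1 - t) * \<beta>" and code: "exact_repair_code q n k d \<alpha> \<beta> B W"
      by auto
    interpret rc "\<lambda>A. ent q (file_space q B) (RV (vv (hsel q B d \<beta> W) W) A)" k d \<alpha> \<beta> "real B"
      by (rule glue[OF pq dn b code]) (use k3 kd in auto)
    have g: "\<epsilon> * \<beta> \<le> Dl" unfolding \<epsilon>_def by (rule gap[OF k3 p1 pk t0 t1 disj al])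
    have Bh: "Bhat k d \<alpha> \<beta> = \<kappa> * \<beta>"
      unfolding Bhat_def \<kappa>_def al sum_distrib_right using b by (simp add: min_mult_distrib_right)
    have Ble: "real B \<le> (\<kappa> - \<epsilon>) * \<beta>" using g Bh unfolding Dl_def by (simp add: algebra_simps)
    have Bpos: "0 < real B" using Bp by simp
    have ke: "0 < \<kappa> - \<epsilon>"
    proof (rule ccontr)
      assume "\<not> 0 < \<kappa> - \<epsilon>"
      then have "(\<kappa> - \<epsilon>) * \<beta> \<le> 0" using b by (simp add: mult_nonpos_nonneg)
      then show False using Ble Bpos by linarith
    qed
    have s1: "1 / (\<kappa> - \<epsilon>) \<le> \<beta> / real B"
    proof -
      have "\<beta> / ((\<kappa> - \<epsilon>) * \<beta>) \<le> \<beta> / real B"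
        using Ble Bpos b by (intro divide_left_mono) auto
      then show ?thesis using b by simp
    qed
    have s2: "\<beta> / Bhat k d \<alpha> \<beta> = 1 / \<kappa>" using b kpos by (simp add: Bh)
    have s3: "1 / \<kappa> + \<epsilon> / \<kappa>^2 \<le> 1 / (\<kappa> - \<epsilon>)"
    proof -
      have "1 / \<kappa> + \<epsilon> / \<kappa>^2 = (\<kappa> + \<epsilon>) / \<kappa>^2" using kpos by (simp add: field_simps power2_eq_square)
      also have "\<dots> \<le> 1 / (\<kappa> - \<epsilon>)"
      proof -
        have "(\<kappa> + \<epsilon>) * (\<kappa> - \<epsilon>) \<le> \<kappa>^2" by (simp add: algebra_simps power2_eq_square)
        then show ?thesis using kpos ke by (simp add: divide_le_eq le_divide_eq field_simps)
      qed
      finally show ?thesis .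
    qed
    show "\<beta> / Bhat k d \<alpha> \<beta> + \<epsilon> / \<kappa>^2 \<le> \<beta> / real B" using s1 s2 s3 by linarith
  qed
qed


end
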